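(* Let $G$ be a finite $p$-group. Then for every $k\geq 1$, $[\lambda_k(G),G^\varphi]=[G,(\lambda_k(G))^\varphi]$ in $\nu(G)$.
   Context: Conventions: ${}^gh=ghg^{-1}$ and $[g,h]=ghg^{-1}h^{-1}$. For a group $G$ let $G^\varphi$ be an isomorphic copy of $G$ via $\varphi:G\to G^\varphi$. The group $\nu(G)$ is the quotient of the free product $G\ast G^\varphi$ by the normal subgroup generated by all words ${}^{g_3}[g_1,g_2^\varphi]\cdot[{}^{g_3}g_1,({}^{g_3}g_2)^\varphi]^{-1}$ and ${}^{g_3^\varphi}[g_1,g_2^\varphi]\cdot[{}^{g_3}g_1,({}^{g_3}g_2)^\varphi]^{-1}$, $g_1,g_2,g_3\in G$. For subgroups $A,B\le G$, $[A,B^\varphi]$ is the subgroup of $\nu(G)$ generated by all $[a,b^\varphi]$, $a\in A$, $b\in B$. The lower central $p$-series is $\lambda_1(G)=G$, $\lambda_{k+1}(G)=[\lambda_k(G),G]\lambda_k(G)^p$. *)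

theory Defs
  imports "HOL-Algebra.Algebra"
begin

text \<open>A letter is a generator together with a flag: (s, False) stands for s,
  (s, True) for s inverse. Words are lists of letters.\<close>

type_synonym 's letter = "'s \<times> bool"

definition inv_word :: "'s letter list \<Rightarrow> 's letter list" where
  "inv_word w = rev (map (\<lambda>(s, b). (s, \<not> b)) w)"

definition words :: "'s set \<Rightarrow> 's letter list set" where
  "words S = {w. set w \<subseteq> S \<times> UNIV}"

inductive_set pres_rel :: "'s set \<Rightarrow> 's letter list set \<Rightarrow> ('s letter list \<times> 's letter list) set"
  for S :: "'s set" and R :: "'s letter list set" where
  refl: "w \<in> words S \<Longrightarrow> (w, w) \<in> pres_rel S R"
| sym: "(u, v) \<in> pres_rel S R \<Longrightarrow> (v, u) \<in> pres_rel S R"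
| trans: "(u, v) \<in> pres_rel S R \<Longrightarrow> (v, w) \<in> pres_rel S R \<Longrightarrow> (u, w) \<in> pres_rel S R"
| cancel: "s \<in> S \<Longrightarrow> ([(s, b), (s, \<not> b)], []) \<in> pres_rel S R"
| relator: "r \<in> R \<Longrightarrow> r \<in> words S \<Longrightarrow> (r, []) \<in> pres_rel S R"
| ctxt: "(u, v) \<in> pres_rel S R \<Longrightarrow> a \<in> words S \<Longrightarrow> c \<in> words S \<Longrightarrow>
         (a @ u @ c, a @ v @ c) \<in> pres_rel S R"

definition pres_mult :: "'s set \<Rightarrow> 's letter list set \<Rightarrow> 's letter list set \<Rightarrow> 's letter list set \<Rightarrow> 's letter list set" where
  "pres_mult S R A B = pres_rel S R `` {(SOME x. x \<in> A) @ (SOME y. y \<in> B)}"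

definition presented_group :: "'s set \<Rightarrow> 's letter list set \<Rightarrow> 's letter list set monoid" where
  "presented_group S R =
     \<lparr> carrier = words S // pres_rel S R,
       monoid.mult = pres_mult S R,
       one = pres_rel S R `` {[]} \<rparr>"

text \<open>Generators: Inl g stands for g in G, Inr g for g^phi in G^phi.\<close>

definition comm_word :: "'s \<Rightarrow> 's \<Rightarrow> 's letter list" where
  "comm_word x y = [(x, False), (y, False), (x, True), (y, True)]"

definition conj_word :: "'s \<Rightarrow> 's letter list \<Rightarrow> 's letter list" where
  "conj_word c w = [(c, False)] @ w @ [(c, True)]"

definition gconj :: "('a, 'b) monoid_scheme \<Rightarrow> 'a \<Rightarrow> 'a \<Rightarrow> 'a" where
  "gconj G g h = g \<otimes>\<^bsub>G\<^esub> h \<otimes>\<^bsub>G\<^esub> inv\<^bsub>G\<^esub> g"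

definition gcomm :: "('a, 'b) monoid_scheme \<Rightarrow> 'a \<Rightarrow> 'a \<Rightarrow> 'a" where
  "gcomm G x y = x \<otimes>\<^bsub>G\<^esub> y \<otimes>\<^bsub>G\<^esub> inv\<^bsub>G\<^esub> x \<otimes>\<^bsub>G\<^esub> inv\<^bsub>G\<^esub> y"

text \<open>Relators of the free product G * G^phi (the multiplication tables of both copies).\<close>
definition free_prod_relators :: "('a, 'b) monoid_scheme \<Rightarrow> ('a + 'a) letter list set" where
  "free_prod_relators G =
     {[(Inl g, False), (Inl h, False), (Inl (g \<otimes>\<^bsub>G\<^esub> h), True)] | g h. g \<in> carrier G \<and> h \<in> carrier G}
   \<union> {[(Inr g, False), (Inr h, False), (Inr (g \<otimes>\<^bsub>G\<^esub> h), True)] | g h. g \<in> carrier G \<and> h \<in> carrier G}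
   \<union> {[(Inl \<one>\<^bsub>G\<^esub>, False)], [(Inr \<one>\<^bsub>G\<^esub>, False)]}"

definition nu_relators :: "('a, 'b) monoid_scheme \<Rightarrow> ('a + 'a) letter list set" where
  "nu_relators G =
     {conj_word (Inl g3) (comm_word (Inl g1) (Inr g2))
        @ inv_word (comm_word (Inl (gconj G g3 g1)) (Inr (gconj G g3 g2)))
      | g1 g2 g3. g1 \<in> carrier G \<and> g2 \<in> carrier G \<and> g3 \<in> carrier G}
   \<union> {conj_word (Inr g3) (comm_word (Inl g1) (Inr g2))
        @ inv_word (comm_word (Inl (gconj G g3 g1)) (Inr (gconj G g3 g2)))
      | g1 g2 g3. g1 \<in> carrier G \<and> g2 \<in> carrier G \<and> g3 \<in> carrier G}"

definition nu :: "('a, 'b) monoid_scheme \<Rightarrow> ('a + 'a) letter list set monoid" where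
  "nu G = presented_group (carrier G <+> carrier G) (free_prod_relators G \<union> nu_relators G)"

definition nu_emb :: "('a, 'b) monoid_scheme \<Rightarrow> 'a \<Rightarrow> ('a + 'a) letter list set" where
  "nu_emb G g = pres_rel (carrier G <+> carrier G) (free_prod_relators G \<union> nu_relators G) `` {[(Inl g, False)]}"

definition nu_phi :: "('a, 'b) monoid_scheme \<Rightarrow> 'a \<Rightarrow> ('a + 'a) letter list set" where
  "nu_phi G g = pres_rel (carrier G <+> carrier G) (free_prod_relators G \<union> nu_relators G) `` {[(Inr g, False)]}"

definition nu_comm_subgroup :: "('a, 'b) monoid_scheme \<Rightarrow> 'a set \<Rightarrow> 'a set \<Rightarrow> ('a + 'a) letter list set set" where
  "nu_comm_subgroup G A B =
     generate (nu G) {gcomm (nu G) (nu_emb G a) (nu_phi G b) | a b. a \<in> A \<and> b \<in> B}"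

text \<open>lcp_aux G p k is lambda_(k+1)(G).\<close>
primrec lcp_aux :: "('a, 'b) monoid_scheme \<Rightarrow> nat \<Rightarrow> nat \<Rightarrow> 'a set" where
  "lcp_aux G p 0 = carrier G"
| "lcp_aux G p (Suc k) =
     generate G ({gcomm G x y | x y. x \<in> lcp_aux G p k \<and> y \<in> carrier G}
                 \<union> {x [^]\<^bsub>G\<^esub> p | x. x \<in> lcp_aux G p k})"

definition lower_central_p :: "('a, 'b) monoid_scheme \<Rightarrow> nat \<Rightarrow> nat \<Rightarrow> 'a set" where
  "lower_central_p G p k = lcp_aux G p (k - 1)"

definition p_group :: "('a, 'b) monoid_scheme \<Rightarrow> nat \<Rightarrow> bool" where
  "p_group G p \<longleftrightarrow> group G \<and> finite (carrier G) \<and> Factorial_Ring.prime p \<and> (\<exists>n. card (carrier G) = p ^ n)"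

end

theory Submission
  imports Defs
begin


context group begin

lemma gcomm_closed[simp]: "x \<in> carrier G \<Longrightarrow> y \<in> carrier G \<Longrightarrow> gcomm G x y \<in> carrier G"
  by (simp add: gcomm_def)
lemma gconj_closed[simp]: "x \<in> carrier G \<Longrightarrow> y \<in> carrier G \<Longrightarrow> gconj G x y \<in> carrier G"
  by (simp add: gconj_def)
lemma canc1[simp]: "x \<in> carrier G \<Longrightarrow> y \<in> carrier G \<Longrightarrow> x \<otimes> (inv x \<otimes> y) = y"
  by (simp add: m_assoc[symmetric])
lemma canc2[simp]: "x \<in> carrier G \<Longrightarrow> y \<in> carrier G \<Longrightarrow> inv x \<otimes> (x \<otimes> y) = y"
  by (simp add: m_assoc[symmetric])

lemmas gsimps = gcomm_def gconj_def m_assoc inv_mult_group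

lemma G1: "x \<in> carrier G \<Longrightarrow> y \<in> carrier G \<Longrightarrow> z \<in> carrier G \<Longrightarrow>
  gcomm G (x \<otimes> y) z = gconj G x (gcomm G y z) \<otimes> gcomm G x z"
  by (simp add: gsimps)
lemma G2: "x \<in> carrier G \<Longrightarrow> y \<in> carrier G \<Longrightarrow> z \<in> carrier G \<Longrightarrow>
  gcomm G x (y \<otimes> z) = gcomm G x y \<otimes> gconj G y (gcomm G x z)"
  by (simp add: gsimps)
lemma G3: "x \<in> carrier G \<Longrightarrow> z \<in> carrier G \<Longrightarrow>
  gcomm G (inv x) z = gconj G (inv x) (inv (gcomm G x z))"
  by (simp add: gsimps)
lemma G4: "x \<in> carrier G \<Longrightarrow> y \<in> carrier G \<Longrightarrow> inv (gcomm G x y) = gcomm G y x"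
  by (simp add: gsimps)
lemma G5: "x \<in> carrier G \<Longrightarrow> y \<in> carrier G \<Longrightarrow> gcomm G x y = gconj G x (inv (gcomm G (inv x) y))"
  by (simp add: gsimps)
lemma G7: "x \<in> carrier G \<Longrightarrow> y \<in> carrier G \<Longrightarrow> gconj G x y = gcomm G x y \<otimes> y"
  by (simp add: gsimps)
lemma G7': "x \<in> carrier G \<Longrightarrow> y \<in> carrier G \<Longrightarrow> gcomm G x y = gconj G x y \<otimes> inv y"
  by (simp add: gsimps)
lemma gconj_mult: "g \<in> carrier G \<Longrightarrow> x \<in> carrier G \<Longrightarrow> y \<in> carrier G \<Longrightarrow>
  gconj G g (x \<otimes> y) = gconj G g x \<otimes> gconj G g y"
  by (simp add: gsimps)
lemma gconj_inv: "g \<in> carrier G \<Longrightarrow> x \<in> carrier G \<Longrightarrow> gconj G g (inv x) = inv (gconj G g x)"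
  by (simp add: gsimps)
lemma gconj_gcomm: "g \<in> carrier G \<Longrightarrow> x \<in> carrier G \<Longrightarrow> y \<in> carrier G \<Longrightarrow>
  gconj G g (gcomm G x y) = gcomm G (gconj G g x) (gconj G g y)"
  by (simp add: gsimps)
lemma gconj_comp: "g \<in> carrier G \<Longrightarrow> h \<in> carrier G \<Longrightarrow> x \<in> carrier G \<Longrightarrow>
  gconj G (g \<otimes> h) x = gconj G g (gconj G h x)"
  by (simp add: gsimps)
lemma gconj_one[simp]: "x \<in> carrier G \<Longrightarrow> gconj G \<one> x = x"
  by (simp add: gsimps)
lemma gcomm_one[simp]: "x \<in> carrier G \<Longrightarrow> gcomm G \<one> x = \<one>"
  by (simp add: gsimps)
lemma gcomm_inv_u: "u \<in> carrier G \<Longrightarrow> c \<in> carrier G \<Longrightarrow> gcomm G u c = u \<otimes> inv (gconj G c u)"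
  by (simp add: gsimps)
lemma gcomm_decomp: "g \<in> carrier G \<Longrightarrow> h \<in> carrier G \<Longrightarrow> gcomm G g h = g \<otimes> gconj G h (inv g)"
  by (simp add: gsimps)
lemma gconj_inv_cancel: "g \<in> carrier G \<Longrightarrow> x \<in> carrier G \<Longrightarrow> gconj G g (gconj G (inv g) x) = x"
  by (simp add: gsimps)
lemma gcomm_eq_one: "x \<in> carrier G \<Longrightarrow> y \<in> carrier G \<Longrightarrow> gcomm G x y = \<one> \<Longrightarrow> x \<otimes> y = y \<otimes> x"
  unfolding gcomm_def
  by (metis inv_closed inv_mult_group inv_inv m_closed r_inv r_one m_assoc  inv_equality)

end


locale nu_struct = G: group G + H: group H
  for G :: "('a,'b) monoid_scheme" and H :: "('c,'d) monoid_scheme" +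
  fixes i f :: "'a \<Rightarrow> 'c"
  assumes i_hom: "i \<in> hom G H" and f_hom: "f \<in> hom G H"
  and rel_i: "\<And>g1 g2 g3. g1 \<in> carrier G \<Longrightarrow> g2 \<in> carrier G \<Longrightarrow> g3 \<in> carrier G \<Longrightarrow>
     gconj H (i g3) (gcomm H (i g1) (f g2)) = gcomm H (i (gconj G g3 g1)) (f (gconj G g3 g2))"
  and rel_f: "\<And>g1 g2 g3. g1 \<in> carrier G \<Longrightarrow> g2 \<in> carrier G \<Longrightarrow> g3 \<in> carrier G \<Longrightarrow>
     gconj H (f g3) (gcomm H (i g1) (f g2)) = gcomm H (i (gconj G g3 g1)) (f (gconj G g3 g2))"
  and gen: "generate H (i ` carrier G \<union> f ` carrier G) = carrier H"
begin

abbreviation tt where "tt a b \<equiv> gcomm H (i a) (f b)"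

lemma ghi: "group_hom G H i" using i_hom by (simp add: group_hom_def group_hom_axioms_def G.group_axioms H.group_axioms)
lemma ghf: "group_hom G H f" using f_hom by (simp add: group_hom_def group_hom_axioms_def G.group_axioms H.group_axioms)

lemma i_closed[simp]: "x \<in> carrier G \<Longrightarrow> i x \<in> carrier H" by (rule hom_in_carrier[OF i_hom])
lemma f_closed[simp]: "x \<in> carrier G \<Longrightarrow> f x \<in> carrier H" by (rule hom_in_carrier[OF f_hom])
lemma i_mult: "x \<in> carrier G \<Longrightarrow> y \<in> carrier G \<Longrightarrow> i (x \<otimes>\<^bsub>G\<^esub> y) = i x \<otimes>\<^bsub>H\<^esub> i y"
  by (rule hom_mult[OF i_hom])
lemma f_mult: "x \<in> carrier G \<Longrightarrow> y \<in> carrier G \<Longrightarrow> f (x \<otimes>\<^bsub>G\<^esub> y) = f x \<otimes>\<^bsub>H\<^esub> f y"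
  by (rule hom_mult[OF f_hom])
lemma i_inv: "x \<in> carrier G \<Longrightarrow> i (inv\<^bsub>G\<^esub> x) = inv\<^bsub>H\<^esub> i x"
  by (rule group_hom.hom_inv[OF ghi])
lemma f_inv: "x \<in> carrier G \<Longrightarrow> f (inv\<^bsub>G\<^esub> x) = inv\<^bsub>H\<^esub> f x"
  by (rule group_hom.hom_inv[OF ghf])
lemma i_one[simp]: "i \<one>\<^bsub>G\<^esub> = \<one>\<^bsub>H\<^esub>" by (rule group_hom.hom_one[OF ghi])
lemma f_one[simp]: "f \<one>\<^bsub>G\<^esub> = \<one>\<^bsub>H\<^esub>" by (rule group_hom.hom_one[OF ghf])
lemma i_gconj: "x \<in> carrier G \<Longrightarrow> y \<in> carrier G \<Longrightarrow> i (gconj G x y) = gconj H (i x) (i y)"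
  by (simp add: gconj_def i_mult i_inv)
lemma f_gconj: "x \<in> carrier G \<Longrightarrow> y \<in> carrier G \<Longrightarrow> f (gconj G x y) = gconj H (f x) (f y)"
  by (simp add: gconj_def f_mult f_inv)
lemma i_gcomm: "x \<in> carrier G \<Longrightarrow> y \<in> carrier G \<Longrightarrow> i (gcomm G x y) = gcomm H (i x) (i y)"
  by (simp add: gcomm_def i_mult i_inv)
lemma f_gcomm: "x \<in> carrier G \<Longrightarrow> y \<in> carrier G \<Longrightarrow> f (gcomm G x y) = gcomm H (f x) (f y)"
  by (simp add: gcomm_def f_mult f_inv)
lemma tt_closed[simp]: "a \<in> carrier G \<Longrightarrow> b \<in> carrier G \<Longrightarrow> tt a b \<in> carrier H"
  by simp

lemma comm_tt: assumes a: "a \<in> carrier G" and b: "b \<in> carrier G" and k: "k \<in> carrier G"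
  shows "gcomm H (tt a b) (f k) = gcomm H (tt a b) (i k)"
proof -
  have e: "gconj H (f k) (tt a b) = gconj H (i k) (tt a b)" using a b k by (simp add: rel_i rel_f)
  show ?thesis
    using H.gcomm_inv_u[of "tt a b" "f k"] H.gcomm_inv_u[of "tt a b" "i k"] e a b k by simp
qed

lemma L1: assumes g: "g \<in> carrier G" and h: "h \<in> carrier G" and k: "k \<in> carrier G"
  shows "gcomm H (tt g h) (f k) = tt (gcomm G g h) k"
proof -
  define k1 where "k1 = gconj G (inv\<^bsub>G\<^esub> h) k"
  define g1 where "g1 = gconj G h (inv\<^bsub>G\<^esub> g)"
  have k1: "k1 \<in> carrier G" using g h k by (simp add: k1_def)
  have g1: "g1 \<in> carrier G" using g h k by (simp add: g1_def)
  have hk1: "gconj G h k1 = k" using g h k by (simp add: k1_def G.gconj_inv_cancel)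
  have u: "tt g h = i g \<otimes>\<^bsub>H\<^esub> f h \<otimes>\<^bsub>H\<^esub> i (inv\<^bsub>G\<^esub> g) \<otimes>\<^bsub>H\<^esub> f (inv\<^bsub>G\<^esub> h)"
    using g h by (simp add: gcomm_def i_inv f_inv)
  have s0: "gconj H (tt g h) (f k) = gconj H (i g) (gconj H (f h) (gconj H (i (inv\<^bsub>G\<^esub> g)) (gconj H (f (inv\<^bsub>G\<^esub> h)) (f k))))"
    unfolding u using g h k by (simp add: H.gconj_comp)
  have s1: "gconj H (f (inv\<^bsub>G\<^esub> h)) (f k) = f k1" using g h k by (simp add: f_gconj k1_def)
  have s2: "gconj H (i (inv\<^bsub>G\<^esub> g)) (f k1) = tt (inv\<^bsub>G\<^esub> g) k1 \<otimes>\<^bsub>H\<^esub> f k1"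
    using g k1 H.G7[of "i (inv\<^bsub>G\<^esub> g)" "f k1"] by simp
  have s3: "gconj H (f h) (tt (inv\<^bsub>G\<^esub> g) k1 \<otimes>\<^bsub>H\<^esub> f k1) = tt g1 k \<otimes>\<^bsub>H\<^esub> f k"
  proof -
    have "gconj H (f h) (tt (inv\<^bsub>G\<^esub> g) k1 \<otimes>\<^bsub>H\<^esub> f k1) = gconj H (f h) (tt (inv\<^bsub>G\<^esub> g) k1) \<otimes>\<^bsub>H\<^esub> gconj H (f h) (f k1)"
      using g h k1 by (simp add: H.gconj_mult)
    also have "gconj H (f h) (tt (inv\<^bsub>G\<^esub> g) k1) = tt g1 k"
      using g h k1 rel_f[of "inv\<^bsub>G\<^esub> g" k1 h] hk1 by (simp add: g1_def)
    also have "gconj H (f h) (f k1) = f k" using h k1 hk1 f_gconj[of h k1] by simp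
    finally show ?thesis .
  qed
  have s4: "gconj H (i g) (tt g1 k \<otimes>\<^bsub>H\<^esub> f k)
     = tt (gconj G g g1) (gconj G g k) \<otimes>\<^bsub>H\<^esub> (tt g k \<otimes>\<^bsub>H\<^esub> f k)"
  proof -
    have "gconj H (i g) (tt g1 k \<otimes>\<^bsub>H\<^esub> f k) = gconj H (i g) (tt g1 k) \<otimes>\<^bsub>H\<^esub> gconj H (i g) (f k)"
      using g g1 k by (simp add: H.gconj_mult)
    also have "gconj H (i g) (tt g1 k) = tt (gconj G g g1) (gconj G g k)"
      using g g1 k rel_i[of g1 k g] by simp
    also have "gconj H (i g) (f k) = tt g k \<otimes>\<^bsub>H\<^esub> f k" using g k H.G7[of "i g" "f k"] by simp
    finally show ?thesis .
  qed
  have "gconj H (tt g h) (f k) = tt (gconj G g g1) (gconj G g k) \<otimes>\<^bsub>H\<^esub> (tt g k \<otimes>\<^bsub>H\<^esub> f k)"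
    using s0 s1 s2 s3 s4 by simp
  hence "gcomm H (tt g h) (f k) = tt (gconj G g g1) (gconj G g k) \<otimes>\<^bsub>H\<^esub> tt g k"
    using g h k g1 H.G7'[of "tt g h" "f k"] by (simp add: H.m_assoc)
  also have "\<dots> = tt (gcomm G g h) k"
  proof -
    have "gcomm G g h = g \<otimes>\<^bsub>G\<^esub> g1" using g h G.gcomm_decomp[of g h] by (simp add: g1_def)
    hence "tt (gcomm G g h) k = gcomm H (i g \<otimes>\<^bsub>H\<^esub> i g1) (f k)" using g g1 by (simp add: i_mult)
    also have "\<dots> = gconj H (i g) (tt g1 k) \<otimes>\<^bsub>H\<^esub> tt g k" using g g1 k H.G1[of "i g" "i g1" "f k"] by simp
    also have "gconj H (i g) (tt g1 k) = tt (gconj G g g1) (gconj G g k)"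
      using g g1 k rel_i[of g1 k g] by simp
    finally show ?thesis by simp
  qed
  finally show ?thesis .
qed

lemma swap: "nu_struct G H f i"
proof
  show "f \<in> hom G H" "i \<in> hom G H" by (rule f_hom, rule i_hom)
next
  fix g1 g2 g3 assume a: "g1 \<in> carrier G" "g2 \<in> carrier G" "g3 \<in> carrier G"
  have e: "gcomm H (f g1) (i g2) = inv\<^bsub>H\<^esub> (tt g2 g1)" using a H.G4[of "i g2" "f g1"] by simp
  have e2: "gcomm H (f (gconj G g3 g1)) (i (gconj G g3 g2)) = inv\<^bsub>H\<^esub> (tt (gconj G g3 g2) (gconj G g3 g1))"
    using a H.G4[of "i (gconj G g3 g2)" "f (gconj G g3 g1)"] by simp
  show "gconj H (f g3) (gcomm H (f g1) (i g2)) = gcomm H (f (gconj G g3 g1)) (i (gconj G g3 g2))"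
    unfolding e e2 using a H.gconj_inv[of "f g3" "tt g2 g1"] rel_f[of g2 g1 g3] by simp
  show "gconj H (i g3) (gcomm H (f g1) (i g2)) = gcomm H (f (gconj G g3 g1)) (i (gconj G g3 g2))"
    unfolding e e2 using a H.gconj_inv[of "i g3" "tt g2 g1"] rel_i[of g2 g1 g3] by simp
next
  show "generate H (f ` carrier G \<union> i ` carrier G) = carrier H" using gen by (simp add: Un_commute)
qed

lemma L1': assumes g: "g \<in> carrier G" and h: "h \<in> carrier G" and k: "k \<in> carrier G"
  shows "gcomm H (gcomm H (f g) (i h)) (i k) = gcomm H (f (gcomm G g h)) (i k)"
  using nu_struct.L1[OF swap g h k] .

lemma LC: assumes x: "x \<in> carrier G" and g: "g \<in> carrier G" and z: "z \<in> carrier G"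
  shows "tt (gcomm G x g) z = gconj H (tt x g) (tt z (gcomm G g x))"
proof -
  have "tt (gcomm G x g) z = gcomm H (tt x g) (i z)" using L1[OF x g z] comm_tt[OF x g z] by simp
  also have "\<dots> = gconj H (tt x g) (inv\<^bsub>H\<^esub> (gcomm H (inv\<^bsub>H\<^esub> (tt x g)) (i z)))"
    using x g z H.G5[of "tt x g" "i z"] by simp
  also have "inv\<^bsub>H\<^esub> (tt x g) = gcomm H (f g) (i x)" using x g H.G4[of "i x" "f g"] by simp
  also have "gcomm H (gcomm H (f g) (i x)) (i z) = gcomm H (f (gcomm G g x)) (i z)"
    by (rule L1'[OF g x z])
  also have "inv\<^bsub>H\<^esub> (gcomm H (f (gcomm G g x)) (i z)) = tt z (gcomm G g x)"
    using x g z H.G4[of "f (gcomm G g x)" "i z"] by simp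
  finally show ?thesis .
qed

lemma comm_tt_i: "a \<in> carrier G \<Longrightarrow> b \<in> carrier G \<Longrightarrow> k \<in> carrier G \<Longrightarrow>
   gcomm H (tt a b) (i k) = tt (gcomm G a b) k"
  using comm_tt L1 by simp

end


context group begin

lemma gcomm_one_r[simp]: "x \<in> carrier G \<Longrightarrow> gcomm G x \<one> = \<one>"
  by (simp add: gsimps)

lemma gconj_pow: "g \<in> carrier G \<Longrightarrow> x \<in> carrier G \<Longrightarrow> gconj G g (x [^] (n::nat)) = (gconj G g x) [^] n"
  by (induct n) (simp_all add: gconj_mult, simp add: gsimps)

lemma sub_pow: "subgroup A G \<Longrightarrow> x \<in> A \<Longrightarrow> x [^] (n::nat) \<in> A"
  by (induct n) (simp_all add: subgroup.one_closed subgroup.m_closed)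

lemma gen_conj:
  assumes S: "S \<subseteq> carrier G" and c: "c \<in> carrier G"
    and cl: "\<And>x. x \<in> S \<Longrightarrow> gconj G c x \<in> generate G S"
    and y: "y \<in> generate G S"
  shows "gconj G c y \<in> generate G S"
  using y
proof induct
  case one then show ?case using c by (simp add: gsimps generate.one)
next
  case (incl h) then show ?case using cl by blast
next
  case (inv h) then show ?case using c S cl[of h] generate_m_inv_closed[OF S]
    by (auto simp: gconj_inv)
next
  case (eng h1 h2) then show ?case using c S generate_in_carrier[OF S]
    by (simp add: gconj_mult generate.eng)
qed

lemma normal_conj: "N \<lhd> G \<Longrightarrow> c \<in> carrier G \<Longrightarrow> y \<in> N \<Longrightarrow> gconj G c y \<in> N"
  unfolding gconj_def using normal_inv_iff by blast

lemma lcp_props: "subgroup (lcp_aux G p k) G \<and> (\<forall>g\<in>carrier G. \<forall>x\<in>lcp_aux G p k. gconj G g x \<in> lcp_aux G p k)"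
proof (induct k)
  case 0 then show ?case by (simp add: subgroup_self)
next
  case (Suc k)
  let ?A = "lcp_aux G p k"
  let ?S = "{gcomm G x y | x y. x \<in> ?A \<and> y \<in> carrier G} \<union> {x [^] p | x. x \<in> ?A}"
  have Ac: "?A \<subseteq> carrier G" using Suc subgroup.subset by blast
  have S: "?S \<subseteq> carrier G" using Ac by auto
  have "subgroup (generate G ?S) G" using generate_is_subgroup[OF S] .
  moreover have "\<forall>g\<in>carrier G. \<forall>x\<in>generate G ?S. gconj G g x \<in> generate G ?S"
  proof (intro ballI)
    fix g x assume g: "g \<in> carrier G" and x: "x \<in> generate G ?S"
    show "gconj G g x \<in> generate G ?S"
    proof (rule gen_conj[OF S g _ x])
      fix y assume "y \<in> ?S"
      then have "gconj G g y \<in> ?S"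
      proof
        assume "y \<in> {gcomm G x y | x y. x \<in> ?A \<and> y \<in> carrier G}"
        then obtain a b where y: "y = gcomm G a b" "a \<in> ?A" "b \<in> carrier G" by blast
        then have e: "gconj G g y = gcomm G (gconj G g a) (gconj G g b)" using Ac g by (simp add: gconj_gcomm subsetD)
        have m: "gconj G g a \<in> ?A" "gconj G g b \<in> carrier G" using Suc g y by auto
        show ?thesis using e m by blast
      next
        assume "y \<in> {x [^] p | x. x \<in> ?A}"
        then obtain a where y: "y = a [^] p" "a \<in> ?A" by blast
        then have "gconj G g y = (gconj G g a) [^] p" using Ac g by (simp add: gconj_pow subsetD)
        then show ?thesis using Suc g y by auto
      qed
      then show "gconj G g y \<in> generate G ?S" by (rule generate.incl)
    qed
  qed
  ultimately show ?case by simp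
qed

end

lemma (in group) quot_exists:
  assumes "N \<lhd> G"
  shows "\<exists>(Q :: 'a set monoid) \<pi>. group Q \<and> \<pi> \<in> hom G Q \<and> (\<forall>a\<in>carrier G. \<pi> a = \<one>\<^bsub>Q\<^esub> \<longleftrightarrow> a \<in> N)"
proof (intro exI conjI)
  show "group (G Mod N)" using normal.factorgroup_is_group[OF assms] .
  show "(\<lambda>a. N #> a) \<in> hom G (G Mod N)" using normal.r_coset_hom_Mod[OF assms] .
  show "\<forall>a\<in>carrier G. N #> a = \<one>\<^bsub>G Mod N\<^esub> \<longleftrightarrow> a \<in> N"
  proof (intro ballI)
    fix a assume a: "a \<in> carrier G"
    have sg: "subgroup N G" using assms normal_imp_subgroup by blast
    show "N #> a = \<one>\<^bsub>G Mod N\<^esub> \<longleftrightarrow> a \<in> N"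
      using rcos_self[OF a sg] subgroup.rcos_const[OF sg is_group] by auto
  qed
qed


context group begin
lemma comm_inv: assumes x: "x \<in> carrier G" and y: "y \<in> carrier G" and e: "x \<otimes> y = y \<otimes> x"
  shows "x \<otimes> inv y = inv y \<otimes> x"
proof -
  have "x \<otimes> inv y = inv y \<otimes> (y \<otimes> x) \<otimes> inv y" using x y by (simp add: m_assoc)
  also have "\<dots> = inv y \<otimes> (x \<otimes> y) \<otimes> inv y" using e by simp
  also have "\<dots> = inv y \<otimes> x" using x y by (simp add: m_assoc)
  finally show ?thesis .
qed
lemma comm_mult: assumes x: "x \<in> carrier G" and y: "y \<in> carrier G" and z: "z \<in> carrier G"
  and e1: "x \<otimes> y = y \<otimes> x" and e2: "x \<otimes> z = z \<otimes> x"
  shows "x \<otimes> (y \<otimes> z) = (y \<otimes> z) \<otimes> x"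
proof -
  have "x \<otimes> (y \<otimes> z) = (x \<otimes> y) \<otimes> z" using x y z by (simp add: m_assoc)
  also have "\<dots> = y \<otimes> (x \<otimes> z)" using e1 x y z by (simp add: m_assoc)
  also have "\<dots> = (y \<otimes> z) \<otimes> x" using e2 x y z by (simp add: m_assoc)
  finally show ?thesis .
qed
lemma conj_comm: assumes x: "x \<in> carrier G" and c: "c \<in> carrier G" and e: "x \<otimes> c = c \<otimes> x"
  shows "gconj G c x = x"
proof -
  have "gconj G c x = x \<otimes> c \<otimes> inv c" unfolding gconj_def using e by simp
  also have "\<dots> = x" using x c by (simp add: m_assoc)
  finally show ?thesis .
qed
end

context group_hom begin
lemma hom_gcomm: "x \<in> carrier G \<Longrightarrow> y \<in> carrier G \<Longrightarrow> h (gcomm G x y) = gcomm H (h x) (h y)"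
  by (simp add: gcomm_def hom_inv)
lemma hom_gconj: "x \<in> carrier G \<Longrightarrow> y \<in> carrier G \<Longrightarrow> h (gconj G x y) = gconj H (h x) (h y)"
  by (simp add: gconj_def hom_inv)
end

context nu_struct begin

abbreviation Tset where "Tset A B \<equiv> generate H {tt a b | a b. a \<in> A \<and> b \<in> B}"

lemma K_normal:
  assumes Bc: "B \<subseteq> carrier G" and Bcl: "\<forall>g\<in>carrier G. \<forall>x\<in>B. gconj G g x \<in> B"
  shows "Tset (carrier G) B \<lhd> H"
proof -
  let ?S = "{tt a b | a b. a \<in> carrier G \<and> b \<in> B}"
  have Sc: "?S \<subseteq> carrier H" using Bc by auto
  have conjS: "gconj H c x \<in> ?S" if c: "c \<in> i ` carrier G \<union> f ` carrier G" and x: "x \<in> ?S" for c x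
  proof -
    obtain a b where ab: "x = tt a b" "a \<in> carrier G" "b \<in> B" using x by blast
    have b: "b \<in> carrier G" using ab Bc by auto
    from c obtain g where g: "g \<in> carrier G" "c = i g \<or> c = f g" by blast
    have "gconj H c x = tt (gconj G g a) (gconj G g b)"
    proof (cases "c = i g")
      case True then show ?thesis using g(1) ab(1,2) b rel_i[of a b g] by simp
    next
      case False then have "c = f g" using g(2) by simp
      then show ?thesis using g(1) ab(1,2) b rel_f[of a b g] by simp
    qed
    moreover have "gconj G g a \<in> carrier G" "gconj G g b \<in> B" using g ab b Bcl by auto
    ultimately show ?thesis by blast
  qed
  have cl: "\<forall>y \<in> generate H ?S. gconj H c y \<in> generate H ?S"
    if c: "c \<in> generate H (i ` carrier G \<union> f ` carrier G)" for c
    using c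
  proof induct
    case one then show ?case using H.generate_in_carrier[OF Sc] by simp
  next
    case (incl c) then show ?case
      using H.gen_conj[OF Sc] conjS generate.incl[of _ ?S H] by auto
  next
    case (inv c)
    then obtain g where g: "g \<in> carrier G" "c = i g \<or> c = f g" by blast
    then have "inv\<^bsub>H\<^esub> c = i (inv\<^bsub>G\<^esub> g) \<or> inv\<^bsub>H\<^esub> c = f (inv\<^bsub>G\<^esub> g)"
      using i_inv f_inv by auto
    then have c': "inv\<^bsub>H\<^esub> c \<in> i ` carrier G \<union> f ` carrier G" using g by auto
    have cc: "inv\<^bsub>H\<^esub> c \<in> carrier H" using c' by auto
    show ?case
      using H.gen_conj[OF Sc cc] conjS[OF c'] generate.incl[of _ ?S H] by auto
  next
    case (eng c1 c2)
    have "c1 \<in> carrier H" "c2 \<in> carrier H" using eng gen by auto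
    then show ?case using eng H.generate_in_carrier[OF Sc] by (simp add: H.gconj_comp)
  qed
  show ?thesis unfolding H.normal_inv_iff
  proof
    show "subgroup (generate H ?S) H" using H.generate_is_subgroup[OF Sc] .
    show "\<forall>x\<in>carrier H. \<forall>h\<in>generate H ?S. x \<otimes>\<^bsub>H\<^esub> h \<otimes>\<^bsub>H\<^esub> inv\<^bsub>H\<^esub> x \<in> generate H ?S"
      using cl gen unfolding gconj_def by auto
  qed
qed

end


context nu_struct begin

lemma step:
  assumes Asg: "subgroup A G" and Acl: "\<forall>g\<in>carrier G. \<forall>x\<in>A. gconj G g x \<in> A"
    and IH: "Tset A (carrier G) \<subseteq> Tset (carrier G) A"
    and Bdef: "B = generate G ({gcomm G x y | x y. x \<in> A \<and> y \<in> carrier G} \<union> {x [^]\<^bsub>G\<^esub> (p::nat) | x. x \<in> A})"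
    and Bcl: "\<forall>g\<in>carrier G. \<forall>x\<in>B. gconj G g x \<in> B"
  shows "Tset B (carrier G) \<subseteq> Tset (carrier G) B"
proof -
  let ?S = "{gcomm G x y | x y. x \<in> A \<and> y \<in> carrier G} \<union> {x [^]\<^bsub>G\<^esub> p | x. x \<in> A}"
  have Ac: "A \<subseteq> carrier G" using Asg subgroup.subset by blast
  have Sc: "?S \<subseteq> carrier G" using Ac by auto
  have Bsg: "subgroup B G" unfolding Bdef by (rule G.generate_is_subgroup[OF Sc])
  have Bc: "B \<subseteq> carrier G" using Bsg subgroup.subset by blast
  define K where "K = Tset (carrier G) B"
  have Kn: "K \<lhd> H" unfolding K_def by (rule K_normal[OF Bc Bcl])
  have Ksg: "subgroup K H" using Kn normal_imp_subgroup by blast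
  have Kc: "K \<subseteq> carrier H" using Ksg subgroup.subset by blast
  have Kconj: "gconj H c y \<in> K" if "c \<in> carrier H" "y \<in> K" for c y
    using H.normal_conj[OF Kn that] .
  have Kin: "tt a b \<in> K" if "a \<in> carrier G" "b \<in> B" for a b
    unfolding K_def by (rule generate.incl) (use that in blast)
  have Kinv: "inv\<^bsub>H\<^esub> y \<in> K" if "y \<in> K" for y using subgroup.m_inv_closed[OF Ksg that] .
  have Kmult: "y \<otimes>\<^bsub>H\<^esub> z \<in> K" if "y \<in> K" "z \<in> K" for y z using subgroup.m_closed[OF Ksg that] .
  have comm1: "gcomm G x g \<in> B" if "x \<in> A" "g \<in> carrier G" for x g
    unfolding Bdef by (rule generate.incl) (use that in blast)
  have comm2: "gcomm G g x \<in> B" if x: "x \<in> A" and g: "g \<in> carrier G" for x g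
  proof -
    have "gcomm G g x = inv\<^bsub>G\<^esub> (gcomm G x g)" using x g Ac G.G4[of x g] by auto
    then show ?thesis using subgroup.m_inv_closed[OF Bsg comm1[OF x g]] by simp
  qed
  have powB: "x [^]\<^bsub>G\<^esub> p \<in> B" if "x \<in> A" for x
    unfolding Bdef by (rule generate.incl) (use that in blast)
  have tt_inv: "tt (inv\<^bsub>G\<^esub> c) z = gconj H (inv\<^bsub>H\<^esub> (i c)) (inv\<^bsub>H\<^esub> (tt c z))"
    if "c \<in> carrier G" "z \<in> carrier G" for c z
    using that i_inv[of c] H.G3[of "i c" "f z"] by simp
  have S1: "tt (gcomm G x g) z \<in> K" if x: "x \<in> A" and g: "g \<in> carrier G" and z: "z \<in> carrier G" for x g z
  proof -
    have xc: "x \<in> carrier G" using x Ac by auto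
    have "tt z (gcomm G g x) \<in> K" using Kin[OF z comm2[OF x g]] .
    then show ?thesis using LC[OF xc g z] Kconj[of "tt x g"] xc g by simp
  qed
  have S1': "tt (gcomm G g x) z \<in> K" if x: "x \<in> A" and g: "g \<in> carrier G" and z: "z \<in> carrier G" for x g z
  proof -
    have xc: "x \<in> carrier G" using x Ac by auto
    have e: "gcomm G g x = inv\<^bsub>G\<^esub> (gcomm G x g)" using xc g G.G4[of x g] by auto
    have "inv\<^bsub>H\<^esub> (tt (gcomm G x g) z) \<in> K" using Kinv[OF S1[OF x g z]] .
    then show ?thesis unfolding e using tt_inv[of "gcomm G x g" z] Kconj xc g z by simp
  qed
  obtain Q :: "'c set monoid" and \<pi> where Qg: "group Q" and \<pi>h: "\<pi> \<in> hom H Q"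
    and ker: "\<forall>a\<in>carrier H. \<pi> a = \<one>\<^bsub>Q\<^esub> \<longleftrightarrow> a \<in> K"
    using H.quot_exists[OF Kn] by blast
  have gh: "group_hom H Q \<pi>" using \<pi>h Qg by (simp add: group_hom_def group_hom_axioms_def H.group_axioms)
  have pm: "\<pi> (x \<otimes>\<^bsub>H\<^esub> y) = \<pi> x \<otimes>\<^bsub>Q\<^esub> \<pi> y" if "x \<in> carrier H" "y \<in> carrier H" for x y
    using group_hom.hom_mult[OF gh that] .
  have pinv: "\<pi> (inv\<^bsub>H\<^esub> x) = inv\<^bsub>Q\<^esub> \<pi> x" if "x \<in> carrier H" for x
    using group_hom.hom_inv[OF gh that] .
  have pc: "\<pi> x \<in> carrier Q" if "x \<in> carrier H" for x using group_hom.hom_closed[OF gh that] .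
  have p1: "\<pi> \<one>\<^bsub>H\<^esub> = \<one>\<^bsub>Q\<^esub>" using group_hom.hom_one[OF gh] .
  define central where "central y \<longleftrightarrow> (\<forall>h\<in>carrier H. \<pi> y \<otimes>\<^bsub>Q\<^esub> \<pi> h = \<pi> h \<otimes>\<^bsub>Q\<^esub> \<pi> y)" for y
  have cent_intro: "central y"
    if y: "y \<in> carrier H" and cm: "\<And>w. w \<in> carrier G \<Longrightarrow> gcomm H y (i w) \<in> K \<and> gcomm H y (f w) \<in> K" for y
  proof -
    have cw: "\<pi> y \<otimes>\<^bsub>Q\<^esub> \<pi> c = \<pi> c \<otimes>\<^bsub>Q\<^esub> \<pi> y" if c: "c \<in> i ` carrier G \<union> f ` carrier G" for c
    proof -
      obtain w where w: "w \<in> carrier G" "c = i w \<or> c = f w" using c by blast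
      have cc: "c \<in> carrier H" using w by auto
      have "gcomm H y c \<in> K" using cm[OF w(1)] w(2) by auto
      then have "\<pi> (gcomm H y c) = \<one>\<^bsub>Q\<^esub>" using ker y cc by simp
      then have "gcomm Q (\<pi> y) (\<pi> c) = \<one>\<^bsub>Q\<^esub>" using group_hom.hom_gcomm[OF gh y cc] by simp
      then show ?thesis using group.gcomm_eq_one[OF Qg pc[OF y] pc[OF cc]] by simp
    qed
    have "\<pi> y \<otimes>\<^bsub>Q\<^esub> \<pi> h = \<pi> h \<otimes>\<^bsub>Q\<^esub> \<pi> y" if h: "h \<in> generate H (i ` carrier G \<union> f ` carrier G)" for h
      using h
    proof induct
      case one then show ?case using p1 pc[OF y] group.is_monoid[OF Qg] by (simp add: monoid.l_one monoid.r_one)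
    next
      case (incl c) then show ?case using cw by blast
    next
      case (inv c)
      have cc: "c \<in> carrier H" using inv by auto
      show ?case using group.comm_inv[OF Qg pc[OF y] pc[OF cc] cw[OF inv]] pinv[OF cc] by simp
    next
      case (eng h1 h2)
      have c1: "h1 \<in> carrier H" "h2 \<in> carrier H" using eng gen by auto
      show ?case using group.comm_mult[OF Qg pc[OF y] pc[OF c1(1)] pc[OF c1(2)] eng(2) eng(4)] pm[OF c1] by simp
    qed
    then show ?thesis unfolding central_def using gen by simp
  qed
  have cent_inv: "central (inv\<^bsub>H\<^esub> y)" if y: "y \<in> carrier H" "central y" for y
    unfolding central_def
  proof
    fix h assume h: "h \<in> carrier H"
    have "\<pi> h \<otimes>\<^bsub>Q\<^esub> \<pi> y = \<pi> y \<otimes>\<^bsub>Q\<^esub> \<pi> h" using y h unfolding central_def by simp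
    then have "\<pi> h \<otimes>\<^bsub>Q\<^esub> inv\<^bsub>Q\<^esub> \<pi> y = inv\<^bsub>Q\<^esub> \<pi> y \<otimes>\<^bsub>Q\<^esub> \<pi> h"
      using group.comm_inv[OF Qg pc[OF h] pc[OF y(1)]] by simp
    then show "\<pi> (inv\<^bsub>H\<^esub> y) \<otimes>\<^bsub>Q\<^esub> \<pi> h = \<pi> h \<otimes>\<^bsub>Q\<^esub> \<pi> (inv\<^bsub>H\<^esub> y)" using pinv[OF y(1)] by simp
  qed
  have cent_mult: "central (y \<otimes>\<^bsub>H\<^esub> z)" if y: "y \<in> carrier H" "central y" and z: "z \<in> carrier H" "central z" for y z
    unfolding central_def
  proof
    fix h assume h: "h \<in> carrier H"
    have e1: "\<pi> h \<otimes>\<^bsub>Q\<^esub> \<pi> y = \<pi> y \<otimes>\<^bsub>Q\<^esub> \<pi> h" using y h unfolding central_def by simp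
    have e2: "\<pi> h \<otimes>\<^bsub>Q\<^esub> \<pi> z = \<pi> z \<otimes>\<^bsub>Q\<^esub> \<pi> h" using z h unfolding central_def by simp
    have "\<pi> h \<otimes>\<^bsub>Q\<^esub> (\<pi> y \<otimes>\<^bsub>Q\<^esub> \<pi> z) = (\<pi> y \<otimes>\<^bsub>Q\<^esub> \<pi> z) \<otimes>\<^bsub>Q\<^esub> \<pi> h"
      using group.comm_mult[OF Qg pc[OF h] pc[OF y(1)] pc[OF z(1)] e1 e2] .
    then show "\<pi> (y \<otimes>\<^bsub>H\<^esub> z) \<otimes>\<^bsub>Q\<^esub> \<pi> h = \<pi> h \<otimes>\<^bsub>Q\<^esub> \<pi> (y \<otimes>\<^bsub>H\<^esub> z)" using pm[OF y(1) z(1)] by simp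
  qed
  have cent_A1: "central (tt a b)" if a: "a \<in> A" and b: "b \<in> carrier G" for a b
  proof (rule cent_intro)
    have ac: "a \<in> carrier G" using a Ac by auto
    show "tt a b \<in> carrier H" using ac b by simp
    fix w assume w: "w \<in> carrier G"
    have "gcomm H (tt a b) (i w) \<in> K" using comm_tt_i[OF ac b w] S1[OF a b w] by simp
    moreover have "gcomm H (tt a b) (f w) \<in> K" using comm_tt[OF ac b w] calculation by simp
    ultimately show "gcomm H (tt a b) (i w) \<in> K \<and> gcomm H (tt a b) (f w) \<in> K" by simp
  qed
  have cent_A2: "central (tt a b)" if a: "a \<in> carrier G" and b: "b \<in> A" for a b
  proof (rule cent_intro)
    have bc: "b \<in> carrier G" using b Ac by auto
    show "tt a b \<in> carrier H" using a bc by simp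
    fix w assume w: "w \<in> carrier G"
    have "gcomm H (tt a b) (i w) \<in> K" using comm_tt_i[OF a bc w] S1'[OF b a w] by simp
    moreover have "gcomm H (tt a b) (f w) \<in> K" using comm_tt[OF a bc w] calculation by simp
    ultimately show "gcomm H (tt a b) (i w) \<in> K \<and> gcomm H (tt a b) (f w) \<in> K" by simp
  qed
  have cent_conj: "\<pi> (gconj H c y) = \<pi> y" if y: "y \<in> carrier H" "central y" and c: "c \<in> carrier H" for c y
  proof -
    have "\<pi> (gconj H c y) = gconj Q (\<pi> c) (\<pi> y)" using group_hom.hom_gconj[OF gh c y(1)] .
    also have "\<dots> = \<pi> y" using group.conj_comm[OF Qg pc[OF y(1)] pc[OF c]] y c unfolding central_def by simp
    finally show ?thesis .
  qed
  have S3: "\<pi> (tt g (b [^]\<^bsub>G\<^esub> n)) = \<pi> (tt g b) [^]\<^bsub>Q\<^esub> (n::nat)" if b: "b \<in> A" and g: "g \<in> carrier G" for b g n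
  proof (induct n)
    case 0 then show ?case using g p1 by simp
  next
    case (Suc n)
    have bc: "b \<in> carrier G" using b Ac by auto
    have bn: "b [^]\<^bsub>G\<^esub> n \<in> carrier G" using bc by simp
    have "tt g (b [^]\<^bsub>G\<^esub> Suc n) = gcomm H (i g) (f (b [^]\<^bsub>G\<^esub> n) \<otimes>\<^bsub>H\<^esub> f b)"
      using bc bn f_mult by simp
    also have "\<dots> = tt g (b [^]\<^bsub>G\<^esub> n) \<otimes>\<^bsub>H\<^esub> gconj H (f (b [^]\<^bsub>G\<^esub> n)) (tt g b)"
      using H.G2[of "i g" "f (b [^]\<^bsub>G\<^esub> n)" "f b"] g bn bc by simp
    finally have "\<pi> (tt g (b [^]\<^bsub>G\<^esub> Suc n)) = \<pi> (tt g (b [^]\<^bsub>G\<^esub> n)) \<otimes>\<^bsub>Q\<^esub> \<pi> (tt g b)"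
      using pm g bn bc cent_conj[of "tt g b" "f (b [^]\<^bsub>G\<^esub> n)"] cent_A2[OF g b] by simp
    then show ?case using Suc by simp
  qed
  have S4: "\<pi> (tt (a [^]\<^bsub>G\<^esub> n) h) = \<pi> (tt a h) [^]\<^bsub>Q\<^esub> (n::nat)" if a: "a \<in> A" and h: "h \<in> carrier G" for a h n
  proof (induct n)
    case 0 then show ?case using h p1 by simp
  next
    case (Suc n)
    have ac: "a \<in> carrier G" using a Ac by auto
    have an: "a [^]\<^bsub>G\<^esub> n \<in> carrier G" using ac by simp
    have "tt (a [^]\<^bsub>G\<^esub> Suc n) h = gcomm H (i (a [^]\<^bsub>G\<^esub> n) \<otimes>\<^bsub>H\<^esub> i a) (f h)"
      using ac an i_mult by simp
    also have "\<dots> = gconj H (i (a [^]\<^bsub>G\<^esub> n)) (tt a h) \<otimes>\<^bsub>H\<^esub> tt (a [^]\<^bsub>G\<^esub> n) h"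
      using H.G1[of "i (a [^]\<^bsub>G\<^esub> n)" "i a" "f h"] h an ac by simp
    finally have "\<pi> (tt (a [^]\<^bsub>G\<^esub> Suc n) h) = \<pi> (tt a h) \<otimes>\<^bsub>Q\<^esub> \<pi> (tt (a [^]\<^bsub>G\<^esub> n) h)"
      using pm h an ac cent_conj[of "tt a h" "i (a [^]\<^bsub>G\<^esub> n)"] cent_A1[OF a h] by simp
    then show ?case using Suc monoid.nat_pow_Suc2[OF group.is_monoid[OF Qg] pc[of "tt a h"]] ac h by simp
  qed
  have S5: "m \<in> carrier H \<and> central m \<and> \<pi> m [^]\<^bsub>Q\<^esub> p = \<one>\<^bsub>Q\<^esub>" if m: "m \<in> Tset (carrier G) A" for m
    using m
  proof induct
    case one
    have "central \<one>\<^bsub>H\<^esub>" unfolding central_def using p1 pc Qg by (simp add: group.is_monoid monoid.l_one monoid.r_one)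
    then show ?case using p1 Qg by (simp add: group.is_monoid monoid.nat_pow_one)
  next
    case (incl m)
    then obtain g b where gb: "m = tt g b" "g \<in> carrier G" "b \<in> A" by blast
    have bc: "b \<in> carrier G" using gb Ac by auto
    have "\<pi> (tt g b) [^]\<^bsub>Q\<^esub> p = \<pi> (tt g (b [^]\<^bsub>G\<^esub> p))" using S3[OF gb(3) gb(2)] by simp
    also have "\<dots> = \<one>\<^bsub>Q\<^esub>" using ker Kin[OF gb(2) powB[OF gb(3)]] gb(2) bc by simp
    finally show ?case using gb cent_A2[OF gb(2) gb(3)] bc by simp
  next
    case (inv m)
    then obtain g b where gb: "m = tt g b" "g \<in> carrier G" "b \<in> A" by blast
    have bc: "b \<in> carrier G" using gb Ac by auto
    have mc: "m \<in> carrier H" using gb bc by simp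
    have "\<pi> (tt g b) [^]\<^bsub>Q\<^esub> p = \<pi> (tt g (b [^]\<^bsub>G\<^esub> p))" using S3[OF gb(3) gb(2)] by simp
    also have "\<dots> = \<one>\<^bsub>Q\<^esub>" using ker Kin[OF gb(2) powB[OF gb(3)]] gb(2) bc by simp
    finally have "\<pi> m [^]\<^bsub>Q\<^esub> p = \<one>\<^bsub>Q\<^esub>" using gb by simp
    then have "\<pi> (inv\<^bsub>H\<^esub> m) [^]\<^bsub>Q\<^esub> p = \<one>\<^bsub>Q\<^esub>"
      using pinv[OF mc] group.nat_pow_inv[OF Qg pc[OF mc], of p] Qg by (simp add: group.is_monoid monoid.inv_one)
    then show ?case using cent_inv[OF mc] cent_A2[OF gb(2) gb(3)] mc gb by simp
  next
    case (eng m1 m2)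
    have c: "m1 \<in> carrier H" "m2 \<in> carrier H" using eng by auto
    have cm: "\<pi> m1 \<otimes>\<^bsub>Q\<^esub> \<pi> m2 = \<pi> m2 \<otimes>\<^bsub>Q\<^esub> \<pi> m1" using eng c unfolding central_def by blast
    have "\<pi> (m1 \<otimes>\<^bsub>H\<^esub> m2) [^]\<^bsub>Q\<^esub> p = \<pi> m1 [^]\<^bsub>Q\<^esub> p \<otimes>\<^bsub>Q\<^esub> \<pi> m2 [^]\<^bsub>Q\<^esub> p"
      using pm[OF c] monoid.pow_mult_distrib[OF group.is_monoid[OF Qg] cm pc[OF c(1)] pc[OF c(2)]] by simp
    also have "\<dots> = \<one>\<^bsub>Q\<^esub>" using eng Qg by (simp add: group.is_monoid monoid.l_one)
    finally show ?case using c eng cent_mult[of m1 m2] by simp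
  qed
  have S6: "tt (x [^]\<^bsub>G\<^esub> p) h \<in> K" if x: "x \<in> A" and h: "h \<in> carrier G" for x h
  proof -
    have xc: "x \<in> carrier G" using x Ac by auto
    have "tt x h \<in> Tset A (carrier G)" by (rule generate.incl) (use x h in blast)
    then have "tt x h \<in> Tset (carrier G) A" using IH by blast
    then have "\<pi> (tt x h) [^]\<^bsub>Q\<^esub> p = \<one>\<^bsub>Q\<^esub>" using S5 by blast
    then have "\<pi> (tt (x [^]\<^bsub>G\<^esub> p) h) = \<one>\<^bsub>Q\<^esub>" using S4[OF x h] by simp
    then show ?thesis using ker xc h by simp
  qed
  have gens_ok: "tt s h \<in> K" if s: "s \<in> ?S" and h: "h \<in> carrier G" for s h
    using s
  proof
    assume "s \<in> {gcomm G x y | x y. x \<in> A \<and> y \<in> carrier G}"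
    then obtain x y where "s = gcomm G x y" "x \<in> A" "y \<in> carrier G" by blast
    then show ?thesis using S1 h by simp
  next
    assume "s \<in> {x [^]\<^bsub>G\<^esub> p | x. x \<in> A}"
    then obtain x where "s = x [^]\<^bsub>G\<^esub> p" "x \<in> A" by blast
    then show ?thesis using S6 h by simp
  qed
  have S7: "\<forall>h\<in>carrier G. tt c h \<in> K" if c: "c \<in> B" for c
    using c unfolding Bdef
  proof induct
    case one then show ?case using subgroup.one_closed[OF Ksg] by simp
  next
    case (incl s) then show ?case using gens_ok by blast
  next
    case (inv s)
    have sc: "s \<in> carrier G" using inv Sc by blast
    show ?case
    proof
      fix h assume h: "h \<in> carrier G"
      have "inv\<^bsub>H\<^esub> (tt s h) \<in> K" using Kinv gens_ok[OF inv h] by blast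
      then show "tt (inv\<^bsub>G\<^esub> s) h \<in> K" using tt_inv[OF sc h] Kconj sc by simp
    qed
  next
    case (eng c1 c2)
    have c: "c1 \<in> carrier G" "c2 \<in> carrier G" using eng G.generate_in_carrier[OF Sc] by auto
    show ?case
    proof
      fix h assume h: "h \<in> carrier G"
      have "tt (c1 \<otimes>\<^bsub>G\<^esub> c2) h = gconj H (i c1) (tt c2 h) \<otimes>\<^bsub>H\<^esub> tt c1 h"
        using i_mult[OF c] H.G1[of "i c1" "i c2" "f h"] c h by simp
      moreover have "gconj H (i c1) (tt c2 h) \<in> K" using Kconj eng h c by simp
      ultimately show "tt (c1 \<otimes>\<^bsub>G\<^esub> c2) h \<in> K" using Kmult eng h by simp
    qed
  qed
  have "{tt a b | a b. a \<in> B \<and> b \<in> carrier G} \<subseteq> K" using S7 by blast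
  then have "Tset B (carrier G) \<subseteq> K" using H.generate_subgroup_incl[OF _ Ksg] by blast
  then show ?thesis unfolding K_def .
qed

end


context nu_struct begin

lemma incl_all: "Tset (lcp_aux G p k) (carrier G) \<subseteq> Tset (carrier G) (lcp_aux G p k)"
proof (induct k)
  case 0 then show ?case by simp
next
  case (Suc k)
  have A: "subgroup (lcp_aux G p k) G" "\<forall>g\<in>carrier G. \<forall>x\<in>lcp_aux G p k. gconj G g x \<in> lcp_aux G p k"
    using G.lcp_props[of p k] by auto
  have B: "\<forall>g\<in>carrier G. \<forall>x\<in>lcp_aux G p (Suc k). gconj G g x \<in> lcp_aux G p (Suc k)"
    using G.lcp_props[of p "Suc k"] by auto
  show ?case by (rule step[OF A Suc _ B]) simp
qed

lemma swap_set:
  assumes U: "U \<subseteq> carrier G" and V: "V \<subseteq> carrier G"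
  shows "generate H {gcomm H (f a) (i b) | a b. a \<in> U \<and> b \<in> V} = Tset V U"
proof
  have S1: "{gcomm H (f a) (i b) | a b. a \<in> U \<and> b \<in> V} \<subseteq> carrier H" using U V by (auto simp: subset_iff)
  have S2: "{tt a b | a b. a \<in> V \<and> b \<in> U} \<subseteq> carrier H" using U V by (auto simp: subset_iff)
  show "generate H {gcomm H (f a) (i b) | a b. a \<in> U \<and> b \<in> V} \<subseteq> Tset V U"
  proof (rule H.generate_subgroup_incl[OF _ H.generate_is_subgroup[OF S2]])
    show "{gcomm H (f a) (i b) | a b. a \<in> U \<and> b \<in> V} \<subseteq> Tset V U"
    proof
      fix z assume "z \<in> {gcomm H (f a) (i b) | a b. a \<in> U \<and> b \<in> V}"
      then obtain a b where ab: "z = gcomm H (f a) (i b)" "a \<in> U" "b \<in> V" by blast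
      have ac: "a \<in> carrier G" "b \<in> carrier G" using ab U V by auto
      have "z = inv\<^bsub>H\<^esub> (tt b a)" using ab ac H.G4[of "i b" "f a"] by simp
      moreover have m: "tt b a \<in> {tt a b | a b. a \<in> V \<and> b \<in> U}" using ab by blast
      ultimately show "z \<in> Tset V U" using generate.inv[OF m] by simp
    qed
  qed
  show "Tset V U \<subseteq> generate H {gcomm H (f a) (i b) | a b. a \<in> U \<and> b \<in> V}"
  proof (rule H.generate_subgroup_incl[OF _ H.generate_is_subgroup[OF S1]])
    show "{tt a b | a b. a \<in> V \<and> b \<in> U} \<subseteq> generate H {gcomm H (f a) (i b) | a b. a \<in> U \<and> b \<in> V}"
    proof
      fix z assume "z \<in> {tt a b | a b. a \<in> V \<and> b \<in> U}"
      then obtain a b where ab: "z = tt a b" "a \<in> V" "b \<in> U" by blast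
      have ac: "a \<in> carrier G" "b \<in> carrier G" using ab U V by auto
      have "z = inv\<^bsub>H\<^esub> (gcomm H (f b) (i a))" using ab ac H.G4[of "f b" "i a"] by simp
      moreover have m: "gcomm H (f b) (i a) \<in> {gcomm H (f a) (i b) | a b. a \<in> U \<and> b \<in> V}" using ab by blast
      ultimately show "z \<in> generate H {gcomm H (f a) (i b) | a b. a \<in> U \<and> b \<in> V}" using generate.inv[OF m] by simp
    qed
  qed
qed

lemma eq_all: "Tset (lcp_aux G p k) (carrier G) = Tset (carrier G) (lcp_aux G p k)"
proof
  show "Tset (lcp_aux G p k) (carrier G) \<subseteq> Tset (carrier G) (lcp_aux G p k)" by (rule incl_all)
  have L: "lcp_aux G p k \<subseteq> carrier G" using G.lcp_props[of p k] subgroup.subset by blast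
  have "generate H {gcomm H (f a) (i b) | a b. a \<in> lcp_aux G p k \<and> b \<in> carrier G}
     \<subseteq> generate H {gcomm H (f a) (i b) | a b. a \<in> carrier G \<and> b \<in> lcp_aux G p k}"
    using nu_struct.incl_all[OF swap, of p k] .
  then show "Tset (carrier G) (lcp_aux G p k) \<subseteq> Tset (lcp_aux G p k) (carrier G)"
    using swap_set[OF L subset_refl] swap_set[OF subset_refl L] by simp
qed

end


lemma words_append[simp]: "u @ v \<in> words S \<longleftrightarrow> u \<in> words S \<and> v \<in> words S"
  by (auto simp: words_def)
lemma words_Nil[simp]: "[] \<in> words S" by (simp add: words_def)
lemma words_Cons[simp]: "a # v \<in> words S \<longleftrightarrow> fst a \<in> S \<and> v \<in> words S"
  by (cases a) (auto simp: words_def)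

lemma pres_rel_words: "(u, v) \<in> pres_rel S R \<Longrightarrow> u \<in> words S \<and> v \<in> words S"
  by (induct rule: pres_rel.induct) auto

lemma pres_equiv: "equiv (words S) (pres_rel S R)"
proof (rule equivI)
  show "refl_on (words S) (pres_rel S R)"
    unfolding refl_on_def using pres_rel_words pres_rel.refl by blast
  show "sym (pres_rel S R)" unfolding sym_def using pres_rel.sym by blast
  show "trans (pres_rel S R)" unfolding trans_def using pres_rel.trans by blast
  show "pres_rel S R \<subseteq> words S \<times> words S" using pres_rel_words by auto
qed

lemma pres_cong: "(u, u') \<in> pres_rel S R \<Longrightarrow> (v, v') \<in> pres_rel S R \<Longrightarrow> (u @ v, u' @ v') \<in> pres_rel S R"
proof -
  assume a: "(u, u') \<in> pres_rel S R" and b: "(v, v') \<in> pres_rel S R"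
  have w: "u \<in> words S" "u' \<in> words S" "v \<in> words S" "v' \<in> words S"
    using pres_rel_words[OF a] pres_rel_words[OF b] by auto
  have "([] @ u @ v, [] @ u' @ v) \<in> pres_rel S R" using pres_rel.ctxt[OF a, of "[]" v] w by simp
  moreover have "(u' @ v @ [], u' @ v' @ []) \<in> pres_rel S R" using pres_rel.ctxt[OF b, of u' "[]"] w by simp
  ultimately show ?thesis using pres_rel.trans by simp
qed

lemma pres_mult_cls:
  assumes u: "u \<in> words S" and v: "v \<in> words S"
  shows "pres_mult S R (pres_rel S R `` {u}) (pres_rel S R `` {v}) = pres_rel S R `` {u @ v}"
proof -
  let ?r = "pres_rel S R"
  have eq: "equiv (words S) ?r" by (rule pres_equiv)
  have "u \<in> ?r `` {u}" using equiv_class_self[OF eq u] .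
  then have x: "(SOME x. x \<in> ?r `` {u}) \<in> ?r `` {u}" by (rule someI)
  have "v \<in> ?r `` {v}" using equiv_class_self[OF eq v] .
  then have y: "(SOME y. y \<in> ?r `` {v}) \<in> ?r `` {v}" by (rule someI)
  have "((SOME x. x \<in> ?r `` {u}) @ (SOME y. y \<in> ?r `` {v}), u @ v) \<in> ?r"
    using x y pres_cong[of _ u S R _ v] pres_rel.sym by blast
  then show ?thesis unfolding pres_mult_def by (rule equiv_class_eq[OF eq])
qed

lemma inv_word_Cons[simp]: "inv_word (a # w) = inv_word w @ [(fst a, \<not> snd a)]"
  by (cases a) (simp add: inv_word_def)
lemma inv_word_Nil[simp]: "inv_word [] = []" by (simp add: inv_word_def)
lemma inv_word_words[simp]: "inv_word w \<in> words S \<longleftrightarrow> w \<in> words S"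
  by (auto simp: inv_word_def words_def)
lemma inv_word_append: "inv_word (u @ v) = inv_word v @ inv_word u"
  by (simp add: inv_word_def)
lemma inv_word_inv_word[simp]: "inv_word (inv_word w) = w"
  by (induct w) (auto simp: inv_word_append)

lemma pres_cancel_word: "w \<in> words S \<Longrightarrow> (w @ inv_word w, []) \<in> pres_rel S R"
proof (induct w)
  case Nil then show ?case using pres_rel.refl[of "[]" S R] by simp
next
  case (Cons a w)
  obtain s b where a: "a = (s, b)" by (cases a)
  have s: "s \<in> S" and w: "w \<in> words S" using Cons a by auto
  have "([a] @ (w @ inv_word w) @ [(s, \<not> b)], [a] @ [] @ [(s, \<not> b)]) \<in> pres_rel S R"
    using pres_rel.ctxt[OF Cons(1)[OF w], of "[a]" "[(s, \<not> b)]"] s a by simp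
  moreover have "([(s, b), (s, \<not> b)], []) \<in> pres_rel S R" using pres_rel.cancel[OF s] .
  ultimately show ?case using pres_rel.trans a by simp
qed

lemma pres_cancel_word': "w \<in> words S \<Longrightarrow> (inv_word w @ w, []) \<in> pres_rel S R"
  using pres_cancel_word[of "inv_word w" S R] by simp

lemma pres_relator_eq:
  assumes r: "(u @ inv_word v, []) \<in> pres_rel S R" and u: "u \<in> words S" and v: "v \<in> words S"
  shows "(u, v) \<in> pres_rel S R"
proof -
  have "((u @ inv_word v) @ v, [] @ v) \<in> pres_rel S R" using pres_cong[OF r pres_rel.refl[OF v]] .
  moreover have "(u @ (inv_word v @ v), u @ []) \<in> pres_rel S R"
    using pres_cong[OF pres_rel.refl[OF u] pres_cancel_word'[OF v]] .
  ultimately show ?thesis using pres_rel.trans pres_rel.sym by (metis append.assoc append.right_neutral append_Nil)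
qed

lemma presented_group_is_group: "group (presented_group S R)"
proof (rule groupI)
  let ?r = "pres_rel S R"
  let ?P = "presented_group S R"
  have eq: "equiv (words S) ?r" by (rule pres_equiv)
  have car: "carrier ?P = words S // ?r" by (simp add: presented_group_def)
  have mul: "x \<otimes>\<^bsub>?P\<^esub> y = pres_mult S R x y" for x y by (simp add: presented_group_def)
  have one: "\<one>\<^bsub>?P\<^esub> = ?r `` {[]}" by (simp add: presented_group_def)
  fix x y z
  show "\<one>\<^bsub>?P\<^esub> \<in> carrier ?P" unfolding car one by (rule quotientI) simp
  assume x: "x \<in> carrier ?P"
  then obtain u where u: "x = ?r `` {u}" "u \<in> words S" unfolding car by (rule quotientE)
  show "\<one>\<^bsub>?P\<^esub> \<otimes>\<^bsub>?P\<^esub> x = x" unfolding one mul u(1) using pres_mult_cls[of "[]" S u R] u by simp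
  show "\<exists>y\<in>carrier ?P. y \<otimes>\<^bsub>?P\<^esub> x = \<one>\<^bsub>?P\<^esub>"
  proof
    show "?r `` {inv_word u} \<in> carrier ?P" unfolding car using u by (simp add: quotientI)
    show "?r `` {inv_word u} \<otimes>\<^bsub>?P\<^esub> x = \<one>\<^bsub>?P\<^esub>" unfolding one mul u(1)
      using pres_mult_cls[of "inv_word u" S u R] u equiv_class_eq[OF eq pres_cancel_word'[OF u(2)]] by simp
  qed
  {
    assume y: "y \<in> carrier ?P"
    then obtain v where v: "y = ?r `` {v}" "v \<in> words S" unfolding car by (rule quotientE)
    show "x \<otimes>\<^bsub>?P\<^esub> y \<in> carrier ?P" unfolding mul u(1) v(1) car using pres_mult_cls[OF u(2) v(2)] u v
      by (simp add: quotientI)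
    assume z: "z \<in> carrier ?P"
    then obtain w where w: "z = ?r `` {w}" "w \<in> words S" unfolding car by (rule quotientE)
    show "x \<otimes>\<^bsub>?P\<^esub> y \<otimes>\<^bsub>?P\<^esub> z = x \<otimes>\<^bsub>?P\<^esub> (y \<otimes>\<^bsub>?P\<^esub> z)" unfolding mul u(1) v(1) w(1)
      using u v w by (simp add: pres_mult_cls)
  }
qed


lemma Inl_Plus_iff[simp]: "Inl a \<in> A <+> B \<longleftrightarrow> a \<in> A" by (auto simp: Plus_def)
lemma Inr_Plus_iff[simp]: "Inr a \<in> A <+> B \<longleftrightarrow> a \<in> B" by (auto simp: Plus_def)

context group begin

abbreviation "nS \<equiv> carrier G <+> carrier G"
abbreviation "nR \<equiv> free_prod_relators G \<union> nu_relators G"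
abbreviation "cls w \<equiv> pres_rel nS nR `` {w}"

lemma nu_eq: "nu G = presented_group nS nR" by (simp add: nu_def)

lemma N0: "group (nu G)" unfolding nu_eq by (rule presented_group_is_group)

lemma N1: "w \<in> words nS \<Longrightarrow> cls w \<in> carrier (nu G)"
  unfolding nu_eq by (simp add: presented_group_def quotientI)

lemma N2: "u \<in> words nS \<Longrightarrow> v \<in> words nS \<Longrightarrow> cls u \<otimes>\<^bsub>nu G\<^esub> cls v = cls (u @ v)"
  unfolding nu_eq by (simp add: presented_group_def pres_mult_cls)

lemma N4: "(u, v) \<in> pres_rel nS nR \<Longrightarrow> cls u = cls v"
  by (rule equiv_class_eq[OF pres_equiv])

lemma N1': "\<one>\<^bsub>nu G\<^esub> = cls []" unfolding nu_eq by (simp add: presented_group_def)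

lemma N3: assumes w: "w \<in> words nS" shows "inv\<^bsub>nu G\<^esub> (cls w) = cls (inv_word w)"
proof (rule group.inv_equality[OF N0])
  show "cls (inv_word w) \<otimes>\<^bsub>nu G\<^esub> cls w = \<one>\<^bsub>nu G\<^esub>"
    using N2[of "inv_word w" w] w N4[OF pres_cancel_word'[OF w]] N1' by simp
  show "cls w \<in> carrier (nu G)" using N1[OF w] .
  show "cls (inv_word w) \<in> carrier (nu G)" using N1 w by simp
qed

lemma N5: assumes x: "x \<in> nS" and y: "y \<in> nS"
  shows "gcomm (nu G) (cls [(x, False)]) (cls [(y, False)]) = cls (comm_word x y)"
proof -
  have i1: "inv\<^bsub>nu G\<^esub> (cls [(x, False)]) = cls [(x, True)]" using N3[of "[(x, False)]"] x by (simp add: inv_word_def)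
  have i2: "inv\<^bsub>nu G\<^esub> (cls [(y, False)]) = cls [(y, True)]" using N3[of "[(y, False)]"] y by (simp add: inv_word_def)
  show ?thesis unfolding gcomm_def i1 i2 comm_word_def using x y N2 by simp
qed

lemma N6: assumes c: "c \<in> nS" and w: "w \<in> words nS"
  shows "gconj (nu G) (cls [(c, False)]) (cls w) = cls (conj_word c w)"
proof -
  have i1: "inv\<^bsub>nu G\<^esub> (cls [(c, False)]) = cls [(c, True)]" using N3[of "[(c, False)]"] c by (simp add: inv_word_def)
  show ?thesis unfolding gconj_def i1 conj_word_def using c w N2 by simp
qed

lemma relator_eq: assumes r: "u @ inv_word v \<in> nR" and u: "u \<in> words nS" and v: "v \<in> words nS"
  shows "cls u = cls v"
proof -
  have "(u @ inv_word v, []) \<in> pres_rel nS nR" using pres_rel.relator[OF r] u v by simp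
  then show ?thesis using N4 pres_relator_eq u v by blast
qed

lemma emb_mult: assumes g: "g \<in> carrier G" and h: "h \<in> carrier G"
  shows "nu_emb G (g \<otimes> h) = nu_emb G g \<otimes>\<^bsub>nu G\<^esub> nu_emb G h"
proof -
  have "cls [(Inl g, False), (Inl h, False)] = cls [(Inl (g \<otimes> h), False)]"
  proof (rule relator_eq)
    show "[(Inl g, False), (Inl h, False)] @ inv_word [(Inl (g \<otimes> h), False)] \<in> nR"
      using g h unfolding free_prod_relators_def by (simp add: inv_word_def)
  qed (use g h in simp)+
  then show ?thesis unfolding nu_emb_def using N2[of "[(Inl g, False)]" "[(Inl h, False)]"] g h by simp
qed

lemma phi_mult: assumes g: "g \<in> carrier G" and h: "h \<in> carrier G"
  shows "nu_phi G (g \<otimes> h) = nu_phi G g \<otimes>\<^bsub>nu G\<^esub> nu_phi G h"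
proof -
  have "cls [(Inr g, False), (Inr h, False)] = cls [(Inr (g \<otimes> h), False)]"
  proof (rule relator_eq)
    show "[(Inr g, False), (Inr h, False)] @ inv_word [(Inr (g \<otimes> h), False)] \<in> nR"
      using g h unfolding free_prod_relators_def by (simp add: inv_word_def)
  qed (use g h in simp)+
  then show ?thesis unfolding nu_phi_def using N2[of "[(Inr g, False)]" "[(Inr h, False)]"] g h by simp
qed

lemma emb_hom: "nu_emb G \<in> hom G (nu G)"
  unfolding hom_def using emb_mult N1 by (auto simp: nu_emb_def)

lemma phi_hom: "nu_phi G \<in> hom G (nu G)"
  unfolding hom_def using phi_mult N1 by (auto simp: nu_phi_def)

lemma rel_gen: assumes c: "c \<in> nS" and g1: "g1 \<in> carrier G" and g2: "g2 \<in> carrier G" and g3: "g3 \<in> carrier G"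
  and r: "conj_word c (comm_word (Inl g1) (Inr g2)) @ inv_word (comm_word (Inl (gconj G g3 g1)) (Inr (gconj G g3 g2))) \<in> nR"
  shows "gconj (nu G) (cls [(c, False)]) (gcomm (nu G) (nu_emb G g1) (nu_phi G g2))
       = gcomm (nu G) (nu_emb G (gconj G g3 g1)) (nu_phi G (gconj G g3 g2))"
proof -
  have w1: "comm_word (Inl g1) (Inr g2) \<in> words nS" using g1 g2 by (simp add: comm_word_def)
  have w2: "comm_word (Inl (gconj G g3 g1)) (Inr (gconj G g3 g2)) \<in> words nS"
    using g1 g2 g3 by (simp add: comm_word_def)
  have w3: "conj_word c (comm_word (Inl g1) (Inr g2)) \<in> words nS" using w1 c by (simp add: conj_word_def)
  have "gcomm (nu G) (nu_emb G g1) (nu_phi G g2) = cls (comm_word (Inl g1) (Inr g2))"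
    unfolding nu_emb_def nu_phi_def using N5 g1 g2 by simp
  moreover have "gcomm (nu G) (nu_emb G (gconj G g3 g1)) (nu_phi G (gconj G g3 g2))
     = cls (comm_word (Inl (gconj G g3 g1)) (Inr (gconj G g3 g2)))"
    unfolding nu_emb_def nu_phi_def using N5 g1 g2 g3 by simp
  moreover have "gconj (nu G) (cls [(c, False)]) (cls (comm_word (Inl g1) (Inr g2)))
      = cls (conj_word c (comm_word (Inl g1) (Inr g2)))" using N6[OF c w1] .
  moreover have "cls (conj_word c (comm_word (Inl g1) (Inr g2))) = cls (comm_word (Inl (gconj G g3 g1)) (Inr (gconj G g3 g2)))"
    using relator_eq[OF r w3 w2] .
  ultimately show ?thesis by simp
qed

lemma nu_gen: "generate (nu G) (nu_emb G ` carrier G \<union> nu_phi G ` carrier G) = carrier (nu G)"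
proof
  let ?X = "nu_emb G ` carrier G \<union> nu_phi G ` carrier G"
  have Xc: "?X \<subseteq> carrier (nu G)" using N1 by (auto simp: nu_emb_def nu_phi_def)
  show "generate (nu G) ?X \<subseteq> carrier (nu G)" using group.generate_incl[OF N0 Xc] .
  have letter: "cls [a] \<in> generate (nu G) ?X" if a: "fst a \<in> nS" for a
  proof -
    obtain s b where sb: "a = (s, b)" by (cases a)
    have s: "s \<in> nS" using a sb by simp
    have m: "cls [(s, False)] \<in> ?X" using s by (auto simp: nu_emb_def nu_phi_def Plus_def)
    show ?thesis
    proof (cases b)
      case True
      have "cls [a] = inv\<^bsub>nu G\<^esub> (cls [(s, False)])" using N3[of "[(s, False)]"] s sb True by (simp add: inv_word_def)
      then show ?thesis using generate.inv[OF m] by simp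
    next
      case False then show ?thesis using generate.incl[OF m] sb by simp
    qed
  qed
  have "cls w \<in> generate (nu G) ?X" if w: "w \<in> words nS" for w
    using w
  proof (induct w)
    case Nil then show ?case using generate.one[of "nu G" ?X] N1' by simp
  next
    case (Cons a w)
    have "cls (a # w) = cls [a] \<otimes>\<^bsub>nu G\<^esub> cls w" using N2[of "[a]" w] Cons by simp
    then show ?case using generate.eng[OF letter Cons(1)] Cons by simp
  qed
  then show "carrier (nu G) \<subseteq> generate (nu G) ?X"
    unfolding nu_eq by (auto simp: presented_group_def elim!: quotientE)
qed

lemma nu_struct_inst: "nu_struct G (nu G) (nu_emb G) (nu_phi G)"
proof (rule nu_struct.intro)
  show "Group.group G" by (rule is_group)
  show "Group.group (nu G)" by (rule N0)
  show "nu_struct_axioms G (nu G) (nu_emb G) (nu_phi G)"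
  proof
    show "nu_emb G \<in> hom G (nu G)" by (rule emb_hom)
    show "nu_phi G \<in> hom G (nu G)" by (rule phi_hom)
    show "generate (nu G) (nu_emb G ` carrier G \<union> nu_phi G ` carrier G) = carrier (nu G)" by (rule nu_gen)
  next
    fix g1 g2 g3 assume g: "g1 \<in> carrier G" "g2 \<in> carrier G" "g3 \<in> carrier G"
    show "gconj (nu G) (nu_emb G g3) (gcomm (nu G) (nu_emb G g1) (nu_phi G g2)) =
       gcomm (nu G) (nu_emb G (gconj G g3 g1)) (nu_phi G (gconj G g3 g2))"
      unfolding nu_emb_def[of G g3]
      by (rule rel_gen) (use g in \<open>auto simp: nu_relators_def\<close>)
    show "gconj (nu G) (nu_phi G g3) (gcomm (nu G) (nu_emb G g1) (nu_phi G g2)) =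
       gcomm (nu G) (nu_emb G (gconj G g3 g1)) (nu_phi G (gconj G g3 g2))"
      unfolding nu_phi_def[of G g3]
      by (rule rel_gen) (use g in \<open>auto simp: nu_relators_def\<close>)
  qed
qed

end

theorem lemma4p1:
  fixes G :: "('a, 'b) monoid_scheme" and p k :: nat
  assumes "p_group G p" and "k \<ge> 1"
  shows "nu_comm_subgroup G (lower_central_p G p k) (carrier G)
       = nu_comm_subgroup G (carrier G) (lower_central_p G p k)"
proof -
  have g: "group G" using assms(1) by (simp add: p_group_def)
  show ?thesis
    unfolding nu_comm_subgroup_def lower_central_p_def
    using nu_struct.eq_all[OF group.nu_struct_inst[OF g], of p "k - 1"] .
qed


end
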